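(* For odd $N\ge5$ let $G_{N,1}$ be the graph with vertex set $\mathbb Z_N$ in which two distinct vertices $i,j$ are adjacent iff $j-i\not\equiv\pm1\pmod N$, and let $Kf(G_{N,1})=\sum_{\{u,v\}} R(u,v)$ be its Kirchhoff index (sum of effective resistances over unordered pairs of distinct vertices). With $\Delta=\sqrt{N(N-4)}$, \[ Kf(G_{N,1})\sim\frac{N^2}{\Delta}\sim N\qquad (N\to\infty\text{ through odd integers}). \]
   Context: Effective resistance uses unit conductance on every edge; $a_N\sim b_N$ means $a_N/b_N\to1$. *)

theory Defs
  imports Complex_Main
begin

text \<open>Graphs on a finite vertex set V (a set of naturals) with a symmetric
adjacency predicate E; every edge has unit conductance.\<close>

definition laplacian :: "nat set \<Rightarrow> (nat \<Rightarrow> nat \<Rightarrow> bool) \<Rightarrow> (nat \<Rightarrow> real) \<Rightarrow> nat \<Rightarrow> real" where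
  "laplacian V E x v = (\<Sum>w\<in>{w\<in>V. E v w}. x v - x w)"

text \<open>Effective resistance between u and v: the potential difference x u - x v
for a potential x on V with unit current injected at u and extracted at v,
i.e. L x = e_u - e_v (well defined for connected graphs).\<close>

definition eff_res :: "nat set \<Rightarrow> (nat \<Rightarrow> nat \<Rightarrow> bool) \<Rightarrow> nat \<Rightarrow> nat \<Rightarrow> real" where
  "eff_res V E u v =
     (let x = (SOME x. \<forall>w\<in>V. laplacian V E x w =
                 (if w = u then 1 else 0) - (if w = v then 1 else 0))
      in x u - x v)"

definition kirchhoff :: "nat set \<Rightarrow> (nat \<Rightarrow> nat \<Rightarrow> bool) \<Rightarrow> real" where
  "kirchhoff V E = (\<Sum>(u,v)\<in>{(u,v). u \<in> V \<and> v \<in> V \<and> u < v}. eff_res V E u v)"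

definition G_adj :: "nat \<Rightarrow> nat \<Rightarrow> nat \<Rightarrow> bool" where
  "G_adj N i j = (i \<noteq> j \<and> (int j - int i) mod int N \<noteq> 1
                      \<and> (int j - int i) mod int N \<noteq> int N - 1)"

definition Kf_G :: "nat \<Rightarrow> real" where
  "Kf_G N = kirchhoff {0..<N} (G_adj N)"

end

theory Submission
  imports Defs "Jordan_Normal_Form.Determinant" "HOL-Real_Asymp.Real_Asymp"
begin


definition sc :: "nat \<Rightarrow> nat \<Rightarrow> nat" where "sc N w = (if w + 1 = N then 0 else w + 1)"
definition pr :: "nat \<Rightarrow> nat \<Rightarrow> nat" where "pr N w = (if w = 0 then N - 1 else w - 1)"

lemma G_adj_iff:
  assumes "N \<ge> 5" "w < N" "j < N"
  shows "G_adj N w j \<longleftrightarrow> j \<noteq> w \<and> j \<noteq> sc N w \<and> j \<noteq> pr N w"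
proof -
  have a: "(int j - int w) mod int N = 1 \<longleftrightarrow> j = sc N w"
  proof
    assume h: "(int j - int w) mod int N = 1"
    have "int j - int w = 1 \<or> int j - int w = 1 - int N"
    proof (cases "int j \<ge> int w")
      case True
      then have "(int j - int w) mod int N = int j - int w" using assms by (intro mod_pos_pos_trivial) auto
      then show ?thesis using h by simp
    next
      case False
      then have "(int j - int w) mod int N = (int j - int w + int N) mod int N"
        by simp
      also have "\<dots> = int j - int w + int N" using assms False by (intro mod_pos_pos_trivial) auto
      finally show ?thesis using h by simp
    qed
    then show "j = sc N w" using assms unfolding sc_def by auto
  next
    assume "j = sc N w"
    then have "int j - int w = 1 \<or> int j - int w = 1 + (-1) * int N" using assms unfolding sc_def
      by (cases "w + 1 = N") auto
    then show "(int j - int w) mod int N = 1"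
    proof
      assume "int j - int w = 1" then show ?thesis using assms by simp
    next
      assume "int j - int w = 1 + (-1) * int N"
      then have "(int j - int w) mod int N = 1 mod int N" by (simp only: mod_mult_self1)
      then show ?thesis using assms by simp
    qed
  qed
  have b: "(int j - int w) mod int N = int N - 1 \<longleftrightarrow> j = pr N w"
  proof
    assume h: "(int j - int w) mod int N = int N - 1"
    have "int j - int w = int N - 1 \<or> int j - int w = - 1"
    proof (cases "int j \<ge> int w")
      case True
      then have "(int j - int w) mod int N = int j - int w" using assms by (intro mod_pos_pos_trivial) auto
      then show ?thesis using h by simp
    next
      case False
      then have "(int j - int w) mod int N = (int j - int w + int N) mod int N"
        by simp
      also have "\<dots> = int j - int w + int N" using assms False by (intro mod_pos_pos_trivial) auto
      finally show ?thesis using h by simp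
    qed
    then show "j = pr N w" using assms unfolding pr_def by auto
  next
    assume "j = pr N w"
    then show "(int j - int w) mod int N = int N - 1" using assms unfolding pr_def
      by (cases "w = 0") (auto simp: of_nat_diff zmod_minus1)
  qed
  show ?thesis unfolding G_adj_def a b by auto
qed

lemma sc_lt: "N \<ge> 5 \<Longrightarrow> w < N \<Longrightarrow> sc N w < N" unfolding sc_def by auto
lemma pr_lt: "N \<ge> 5 \<Longrightarrow> w < N \<Longrightarrow> pr N w < N" unfolding pr_def by auto

lemma lap_formula:
  assumes N: "N \<ge> 5" and w: "w < N"
  shows "laplacian {0..<N} (G_adj N) x w
     = (real N - 2) * x w + x (pr N w) + x (sc N w) - (\<Sum>j<N. x j)"
proof -
  have set: "{w'\<in>{0..<N}. G_adj N w w'} = {0..<N} - {w, sc N w, pr N w}"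
    using G_adj_iff[OF N w] by auto
  have sub: "{w, sc N w, pr N w} \<subseteq> {0..<N}" using sc_lt[OF N w] pr_lt[OF N w] w by auto
  have d: "sc N w \<noteq> w" "pr N w \<noteq> w" "sc N w \<noteq> pr N w" using N w unfolding sc_def pr_def by auto
  have "laplacian {0..<N} (G_adj N) x w = (\<Sum>j\<in>{0..<N} - {w, sc N w, pr N w}. x w - x j)"
    unfolding laplacian_def set ..
  also have "\<dots> = (\<Sum>j\<in>{0..<N}. x w - x j) - (\<Sum>j\<in>{w, sc N w, pr N w}. x w - x j)"
    using sub by (subst sum_diff) auto
  also have "(\<Sum>j\<in>{w, sc N w, pr N w}. x w - x j) = (x w - x (sc N w)) + (x w - x (pr N w))"
    using d by simp
  also have "(\<Sum>j\<in>{0..<N}. x w - x j) = real N * x w - (\<Sum>j<N. x j)"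
    by (simp add: sum_subtractf atLeast0LessThan)
  finally show ?thesis by (simp add: algebra_simps)
qed

lemma res_bounds:
  assumes N: "N \<ge> 5" and uv: "u < N" "v < N" "u \<noteq> v"
    and eq: "\<forall>w\<in>{0..<N}. laplacian {0..<N} (G_adj N) x w =
                 (if w = u then 1 else 0) - (if w = v then 1 else 0)"
  shows "(2 - 4 / (real N - 4)) / (real N - 2) \<le> x u - x v
       \<and> x u - x v \<le> (2 + 4 / (real N - 4)) / (real N - 2)"
proof -
  define S where "S = (\<Sum>j<N. x j)"
  define y where "y w = x w - S / real N" for w
  define b where "b w = (if w = u then 1 else 0) - (if w = v then 1 else (0::real))" for w
  have Npos: "real N > 0" using N by simp
  have ey: "(real N - 2) * y w + y (pr N w) + y (sc N w) = b w" if "w < N" for w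
  proof -
    have e: "(real N - 2) * x w + x (pr N w) + x (sc N w) - S = b w"
      using eq lap_formula[OF N that, of x] that unfolding S_def b_def by auto
    have h: "(real N - 2) * (S / real N) + S / real N + S / real N = S" using Npos by (simp add: field_simps)
    show ?thesis unfolding y_def right_diff_distrib using h e by linarith
  qed
  define m where "m = Max ((\<lambda>w. \<bar>y w\<bar>) ` {..<N})"
  have ne: "{..<N} \<noteq> {}" using N lessThan_empty_iff by auto
  have mb: "\<bar>y w\<bar> \<le> m" if "w < N" for w unfolding m_def using that by (intro Max_ge) auto
  have "m \<in> (\<lambda>w. \<bar>y w\<bar>) ` {..<N}"
    using Max_in[of "(\<lambda>w. \<bar>y w\<bar>) ` {..<N}"] ne unfolding m_def by blast
  then obtain w0 where w0: "w0 < N" "\<bar>y w0\<bar> = m" by auto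
  have bb: "\<bar>b w\<bar> \<le> 1" for w unfolding b_def using uv by auto
  have "(real N - 2) * m \<le> 1 + 2 * m"
  proof -
    have "(real N - 2) * m = \<bar>(real N - 2) * y w0\<bar>" using w0 N by (simp add: abs_mult)
    also have "\<dots> = \<bar>b w0 - y (pr N w0) - y (sc N w0)\<bar>" using ey[OF w0(1)] by (simp add: algebra_simps)
    also have "\<dots> \<le> 1 + 2 * m" using bb[of w0] mb[OF pr_lt[OF N w0(1)]] mb[OF sc_lt[OF N w0(1)]] by linarith
    finally show ?thesis .
  qed
  then have m4: "m \<le> 1 / (real N - 4)" using N by (simp add: field_simps)
  have m0: "m \<ge> 0" using mb[OF uv(1)] by linarith
  have yu: "1 - 2 * m \<le> (real N - 2) * y u \<and> (real N - 2) * y u \<le> 1 + 2 * m"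
    using ey[OF uv(1)] mb[OF pr_lt[OF N uv(1)]] mb[OF sc_lt[OF N uv(1)]] uv unfolding b_def by auto
  have yv: "-1 - 2 * m \<le> (real N - 2) * y v \<and> (real N - 2) * y v \<le> -1 + 2 * m"
    using ey[OF uv(2)] mb[OF pr_lt[OF N uv(2)]] mb[OF sc_lt[OF N uv(2)]] uv unfolding b_def by (auto simp: abs_le_iff)
  have dif: "x u - x v = y u - y v" unfolding y_def by simp
  have N2: "real N - 2 > 0" using N by simp
  have "2 - 4 / (real N - 4) \<le> 2 - 4 * m" using m4 by simp
  also have "\<dots> \<le> (real N - 2) * (y u - y v)" using yu yv by (simp add: algebra_simps)
  finally have L: "(2 - 4 / (real N - 4)) / (real N - 2) \<le> y u - y v"
    using N2 by (simp add: divide_le_eq mult.commute)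
  have "(real N - 2) * (y u - y v) \<le> 2 + 4 * m" using yu yv by (simp add: algebra_simps)
  also have "\<dots> \<le> 2 + 4 / (real N - 4)" using m4 by simp
  finally have U: "y u - y v \<le> (2 + 4 / (real N - 4)) / (real N - 2)"
    using N2 by (simp add: le_divide_eq mult.commute)
  show ?thesis using L U dif by simp
qed



lemma ybound:
  assumes N: "N \<ge> 5"
    and ey: "\<And>w. w < N \<Longrightarrow> (real N - 2) * y w + y (pr N w) + y (sc N w) = b w"
    and bb: "\<And>w. w < N \<Longrightarrow> \<bar>b w\<bar> \<le> B"
    and w: "w < N"
  shows "\<bar>y w\<bar> \<le> B / (real N - 4)"
proof -
  define m where "m = Max ((\<lambda>w. \<bar>y w\<bar>) ` {..<N})"
  have ne: "{..<N} \<noteq> {}" using N lessThan_empty_iff by auto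
  have mb: "\<bar>y w\<bar> \<le> m" if "w < N" for w unfolding m_def using that by (intro Max_ge) auto
  have "m \<in> (\<lambda>w. \<bar>y w\<bar>) ` {..<N}"
    using Max_in[of "(\<lambda>w. \<bar>y w\<bar>) ` {..<N}"] ne unfolding m_def by blast
  then obtain w0 where w0: "w0 < N" "\<bar>y w0\<bar> = m" by auto
  have "(real N - 2) * m \<le> B + 2 * m"
  proof -
    have "(real N - 2) * m = \<bar>(real N - 2) * y w0\<bar>" using w0 N by (simp add: abs_mult)
    also have "\<dots> = \<bar>b w0 - y (pr N w0) - y (sc N w0)\<bar>" using ey[OF w0(1)] by (simp add: algebra_simps)
    also have "\<dots> \<le> B + 2 * m" using bb[OF w0(1)] mb[OF pr_lt[OF N w0(1)]] mb[OF sc_lt[OF N w0(1)]] by linarith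
    finally show ?thesis .
  qed
  then have m4: "m \<le> B / (real N - 4)" using N by (simp add: field_simps)
  show ?thesis using mb[OF w] m4 by linarith
qed

lemma sum_sc: assumes N: "N \<ge> 5" shows "(\<Sum>w<N. f (sc N w)) = (\<Sum>w<N. (f::nat\<Rightarrow>real) w)"
proof -
  have inj: "inj_on (sc N) {..<N}" unfolding sc_def inj_on_def by auto
  have im: "sc N ` {..<N} = {..<N}" using sc_lt[OF N] inj by (intro endo_inj_surj) auto
  show ?thesis using sum.reindex[OF inj, of f] im by simp
qed

lemma sum_pr: assumes N: "N \<ge> 5" shows "(\<Sum>w<N. f (pr N w)) = (\<Sum>w<N. (f::nat\<Rightarrow>real) w)"
proof -
  have inj: "inj_on (pr N) {..<N}" unfolding pr_def inj_on_def by auto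
  have im: "pr N ` {..<N} = {..<N}" using pr_lt[OF N] inj by (intro endo_inj_surj) auto
  show ?thesis using sum.reindex[OF inj, of f] im by simp
qed

definition Mm :: "nat \<Rightarrow> real mat" where
  "Mm N = mat N N (\<lambda>(i,j). if j = i then real N - 2 else if j = sc N i \<or> j = pr N i then 1 else 0)"

lemma Mm_row:
  assumes N: "N \<ge> 5" and i: "i < N"
  shows "(\<Sum>j\<in>{0..<N}. (if j = i then real N - 2 else if j = sc N i \<or> j = pr N i then 1 else 0) * f j)
     = (real N - 2) * f i + f (pr N i) + f (sc N i)"
proof -
  have d: "sc N i \<noteq> i" "pr N i \<noteq> i" "sc N i \<noteq> pr N i" using N i unfolding sc_def pr_def by auto
  have "(\<Sum>j\<in>{0..<N}. (if j = i then real N - 2 else if j = sc N i \<or> j = pr N i then 1 else 0) * f j)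
     = (\<Sum>j\<in>{0..<N}. (if j = i then (real N - 2) * f j else 0) + (if j = pr N i then f j else 0)
            + (if j = sc N i then f j else 0))"
    using d by (intro sum.cong) auto
  also have "\<dots> = (real N - 2) * f i + f (pr N i) + f (sc N i)"
    using i pr_lt[OF N i] sc_lt[OF N i] by (simp add: sum.distrib)
  finally show ?thesis .
qed

lemma Mm_mult:
  assumes N: "N \<ge> 5" and i: "i < N" and v: "v \<in> carrier_vec N"
  shows "(Mm N *\<^sub>v v) $ i = (real N - 2) * v $ i + v $ (pr N i) + v $ (sc N i)"
  using i v Mm_row[OF N i, of "\<lambda>j. v $ j"] unfolding Mm_def
  by (simp add: scalar_prod_def row_def)

lemma Mm_det: assumes N: "N \<ge> 5" shows "det (Mm N) \<noteq> 0"
proof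
  assume "det (Mm N) = 0"
  then obtain v where v: "v \<in> carrier_vec N" "v \<noteq> 0\<^sub>v N" "Mm N *\<^sub>v v = 0\<^sub>v N"
    using det_0_iff_vec_prod_zero_field[of "Mm N" N] unfolding Mm_def by auto
  have "\<bar>v $ w\<bar> \<le> 0 / (real N - 4)" if "w < N" for w
  proof (rule ybound[OF N _ _ that, of "\<lambda>j. v $ j" "\<lambda>_. 0"])
    fix w assume w: "w < N"
    show "(real N - 2) * v $ w + v $ (pr N w) + v $ (sc N w) = 0"
      using Mm_mult[OF N w v(1)] v(3) w by simp
  qed simp
  then have "v = 0\<^sub>v N" using v(1) by (intro eq_vecI) auto
  then show False using v(2) by simp
qed

lemma exists_sol:
  assumes N: "N \<ge> 5" and sb: "(\<Sum>w<N. b w) = 0"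
  shows "\<exists>x. \<forall>w\<in>{0..<N}. laplacian {0..<N} (G_adj N) x w = b w"
proof -
  define M where "M = Mm N"
  have MC: "M \<in> carrier_mat N N" unfolding M_def Mm_def by simp
  define d where "d = det M"
  have d0: "d \<noteq> 0" unfolding d_def M_def using Mm_det[OF N] .
  define bv where "bv = vec N b"
  define z where "z = (1 / d) \<cdot>\<^sub>v (adj_mat M *\<^sub>v bv)"
  have zC: "z \<in> carrier_vec N" unfolding z_def bv_def using adj_mat(1)[OF MC] by simp
  have "M *\<^sub>v (adj_mat M *\<^sub>v bv) = (M * adj_mat M) *\<^sub>v bv"
    using adj_mat(1)[OF MC] MC by (simp add: bv_def)
  also have "\<dots> = (d \<cdot>\<^sub>m 1\<^sub>m N) *\<^sub>v bv" using adj_mat(2)[OF MC] unfolding d_def by simp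
  finally have e1: "M *\<^sub>v (adj_mat M *\<^sub>v bv) = (d \<cdot>\<^sub>m 1\<^sub>m N) *\<^sub>v bv" .
  have Mz: "M *\<^sub>v z = bv"
    unfolding z_def using MC adj_mat(1)[OF MC] e1 d0
    by (subst mult_mat_vec[OF MC]) (auto simp: bv_def intro!: eq_vecI)
  define x where "x w = z $ w" for w
  have ex: "(real N - 2) * x w + x (pr N w) + x (sc N w) = b w" if "w < N" for w
    using Mm_mult[OF N that zC] Mz that unfolding x_def M_def bv_def by simp
  have "(\<Sum>w<N. (real N - 2) * x w + x (pr N w) + x (sc N w)) = real N * (\<Sum>w<N. x w)"
  proof -
    have "(\<Sum>w<N. (real N - 2) * x w + x (pr N w) + x (sc N w))
        = (\<Sum>w<N. (real N - 2) * x w) + (\<Sum>w<N. x (pr N w)) + (\<Sum>w<N. x (sc N w))"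
      by (simp only: sum.distrib)
    also have "\<dots> = (real N - 2) * (\<Sum>w<N. x w) + (\<Sum>w<N. x w) + (\<Sum>w<N. x w)"
      by (simp only: sum_pr[OF N] sum_sc[OF N] sum_distrib_left)
    finally show ?thesis by (simp add: algebra_simps)
  qed
  then have "real N * (\<Sum>w<N. x w) = 0" using ex sb by simp
  then have S0: "(\<Sum>w<N. x w) = 0" using N by simp
  show ?thesis
  proof (intro exI ballI)
    fix w assume "w \<in> {0..<N}"
    then have w: "w < N" by simp
    show "laplacian {0..<N} (G_adj N) x w = b w" using lap_formula[OF N w, of x] ex[OF w] S0 by simp
  qed
qed



lemma eff_res_bounds:
  assumes N: "N \<ge> 5" and uv: "u < N" "v < N" "u < v"
  shows "(2 - 4 / (real N - 4)) / (real N - 2) \<le> eff_res {0..<N} (G_adj N) u v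
       \<and> eff_res {0..<N} (G_adj N) u v \<le> (2 + 4 / (real N - 4)) / (real N - 2)"
proof -
  define b where "b w = (if w = u then 1 else 0) - (if w = v then 1 else (0::real))" for w
  have sb: "(\<Sum>w<N. b w) = 0" unfolding b_def using uv by (simp add: sum_subtractf)
  have ex: "\<exists>x. \<forall>w\<in>{0..<N}. laplacian {0..<N} (G_adj N) x w =
                 (if w = u then 1 else 0) - (if w = v then 1 else 0)"
    using exists_sol[OF N sb] unfolding b_def .
  define x where "x = (SOME x. \<forall>w\<in>{0..<N}. laplacian {0..<N} (G_adj N) x w =
                 (if w = u then 1 else 0) - (if w = v then 1 else 0))"
  have xe: "\<forall>w\<in>{0..<N}. laplacian {0..<N} (G_adj N) x w =
                 (if w = u then 1 else 0) - (if w = v then 1 else 0)"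
    unfolding x_def using someI_ex[OF ex] .
  have "eff_res {0..<N} (G_adj N) u v = x u - x v" unfolding eff_res_def x_def Let_def ..
  then show ?thesis using res_bounds[OF N uv(1,2) _ xe] uv(3) by simp
qed

lemma card_pairs: "2 * card {(u,v). u \<in> {0..<n} \<and> v \<in> {0..<n} \<and> u < (v::nat)} = n * (n - 1)"
proof (induction n)
  case 0 then show ?case by simp
next
  case (Suc n)
  have eq: "{(u,v). u \<in> {0..<Suc n} \<and> v \<in> {0..<Suc n} \<and> u < v}
      = {(u,v). u \<in> {0..<n} \<and> v \<in> {0..<n} \<and> u < v} \<union> (\<lambda>u. (u, n)) ` {0..<n}"
    by auto
  have fin: "finite {(u,v). u \<in> {0..<n} \<and> v \<in> {0..<n} \<and> u < (v::nat)}"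
    by (rule finite_subset[of _ "{0..<n} \<times> {0..<n}"]) auto
  have dis: "{(u,v). u \<in> {0..<n} \<and> v \<in> {0..<n} \<and> u < v} \<inter> (\<lambda>u. (u, n)) ` {0..<n} = {}" by auto
  have ci: "card ((\<lambda>u. (u, n)) ` {0..<n}) = n" by (subst card_image) (auto simp: inj_on_def)
  show ?case unfolding eq using card_Un_disjoint[OF fin _ dis] ci Suc.IH
    by (cases n) (auto simp: algebra_simps)
qed

lemma Kf_bounds:
  assumes N: "N \<ge> 5"
  shows "real N * (real N - 1) / 2 * ((2 - 4 / (real N - 4)) / (real N - 2)) \<le> Kf_G N
       \<and> Kf_G N \<le> real N * (real N - 1) / 2 * ((2 + 4 / (real N - 4)) / (real N - 2))"
proof -
  let ?P = "{(u,v). u \<in> {0..<N} \<and> v \<in> {0..<N} \<and> u < (v::nat)}"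
  have c: "real (card ?P) = real N * (real N - 1) / 2"
  proof -
    have "real (2 * card ?P) = real (N * (N - 1))" using card_pairs[of N] by metis
    then show ?thesis using N by (simp add: of_nat_diff)
  qed
  have K: "Kf_G N = (\<Sum>p\<in>?P. eff_res {0..<N} (G_adj N) (fst p) (snd p))"
    unfolding Kf_G_def kirchhoff_def by (simp add: case_prod_beta)
  have lo: "real (card ?P) * ((2 - 4 / (real N - 4)) / (real N - 2)) \<le> Kf_G N"
    unfolding K by (rule sum_bounded_below) (use eff_res_bounds[OF N] in auto)
  have hi: "Kf_G N \<le> real (card ?P) * ((2 + 4 / (real N - 4)) / (real N - 2))"
    unfolding K by (rule sum_bounded_above) (use eff_res_bounds[OF N] in auto)
  show ?thesis using lo[unfolded c] hi[unfolded c] by blast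
qed

theorem mainTheorem12:
  fixes N :: "nat \<Rightarrow> nat" and \<Delta> :: "nat \<Rightarrow> real"
  assumes "\<And>k. N k = 2 * k + 5"
      and "\<And>k. \<Delta> k = sqrt (real (N k) * (real (N k) - 4))"
  shows "(\<lambda>k. Kf_G (N k) / (real (N k) ^ 2 / \<Delta> k)) \<longlonglongrightarrow> 1
       \<and> (\<lambda>k. (real (N k) ^ 2 / \<Delta> k) / real (N k)) \<longlonglongrightarrow> 1"
proof -
  have rN: "real (N k) = 2 * real k + 5" for k using assms(1)[of k] by simp
  define lo where "lo k = (2 * real k + 5) * (2 * real k + 4) / 2 * ((2 - 4 / (2 * real k + 1)) / (2 * real k + 3)) / (2 * real k + 5)" for k
  define hi where "hi k = (2 * real k + 5) * (2 * real k + 4) / 2 * ((2 + 4 / (2 * real k + 1)) / (2 * real k + 3)) / (2 * real k + 5)" for k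
  have lo_l: "lo \<longlonglongrightarrow> 1" unfolding lo_def by real_asymp
  have hi_l: "hi \<longlonglongrightarrow> 1" unfolding hi_def by real_asymp
  have bnd: "lo k \<le> Kf_G (N k) / real (N k) \<and> Kf_G (N k) / real (N k) \<le> hi k" for k
  proof -
    have N5: "N k \<ge> 5" using assms(1)[of k] by simp
    have e: "real (N k) - 1 = 2 * real k + 4" "real (N k) - 4 = 2 * real k + 1" "real (N k) - 2 = 2 * real k + 3"
      using rN[of k] by simp_all
    have e': "2 * real k + 5 - 1 = 2 * real k + 4" "2 * real k + 5 - 4 = 2 * real k + 1" "2 * real k + 5 - 2 = 2 * real k + 3"
      by simp_all
    have pos: "real (N k) > 0" using N5 by simp
    have l1: "lo k = (real (N k) * (real (N k) - 1) / 2 * ((2 - 4 / (real (N k) - 4)) / (real (N k) - 2))) / real (N k)"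
      unfolding lo_def by (simp only: rN e')
    have h1: "hi k = (real (N k) * (real (N k) - 1) / 2 * ((2 + 4 / (real (N k) - 4)) / (real (N k) - 2))) / real (N k)"
      unfolding hi_def by (simp only: rN e')
    show ?thesis unfolding l1 h1 using Kf_bounds[OF N5] pos
      by (intro conjI divide_right_mono) auto
  qed
  have K1: "(\<lambda>k. Kf_G (N k) / real (N k)) \<longlonglongrightarrow> 1"
    by (rule tendsto_sandwich[OF _ _ lo_l hi_l]) (use bnd in auto)
  have D: "\<Delta> k = sqrt ((2 * real k + 5) * (2 * real k + 1))" for k
    using assms(2)[of k] rN[of k] by simp
  have D1: "(\<lambda>k. \<Delta> k / real (N k)) \<longlonglongrightarrow> 1"
    unfolding D rN by real_asymp
  have D2: "(\<lambda>k. (real (N k) ^ 2 / \<Delta> k) / real (N k)) \<longlonglongrightarrow> 1"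
    unfolding D rN by real_asymp
  have eqf: "Kf_G (N k) / (real (N k) ^ 2 / \<Delta> k) = (Kf_G (N k) / real (N k)) * (\<Delta> k / real (N k))" for k
    by (simp add: field_simps power2_eq_square)
  have "(\<lambda>k. (Kf_G (N k) / real (N k)) * (\<Delta> k / real (N k))) \<longlonglongrightarrow> 1 * 1"
    by (intro tendsto_mult K1 D1)
  then show ?thesis using D2 unfolding eqf by simp
qed

end
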